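(* Let $\mathbb{F}$ be a field and $\mathcal{C} \subseteq \mathbb{F}^{m \times n}$ a linear code with $\dim(\mathcal{C}) = mk$ for a positive integer $k$. The following are equivalent: (1) there exists a subspace $\mathcal{L} \subseteq \mathbb{F}^n$ with $\mathcal{C} = \mathcal{V}_\mathcal{L}$; (2) $d_{M,km}(\mathcal{C}) = k$; (3) $d_{M,r}(\mathcal{C}) = \lceil r/m \rceil$ for all $1 \leq r \leq mk$.
   Context: ${\rm Row}(V)$ is the row space. For a subspace $\mathcal{L} \subseteq \mathbb{F}^n$, $\mathcal{V}_\mathcal{L} = \{V \in \mathbb{F}^{m\times n} \mid {\rm Row}(V) \subseteq \mathcal{L}\}$, and $d_{M,r}(\mathcal{C}) = \min\{\dim \mathcal{L} \mid \mathcal{L} \subseteq \mathbb{F}^n \text{ subspace}, \dim(\mathcal{C} \cap \mathcal{V}_\mathcal{L}) \ge r\}$. *)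

theory Defs
  imports "HOL-Analysis.Analysis"
begin

text \<open>Matrices in F^(m x n) are rendered as 'a^'n^'m (rows indexed by 'm, columns by 'n),
  with m = CARD('m), n = CARD('n). Scalar multiplication on matrices is entrywise.\<close>

definition mscale :: "'a::field \<Rightarrow> 'a^'n^'m \<Rightarrow> 'a^'n^'m" where
  "mscale c A = (\<chi> i. c *s (A $ i))"

interpretation mat: vector_space "mscale :: 'a::field \<Rightarrow> 'a^'n^'m \<Rightarrow> 'a^'n^'m"
  by unfold_locales (auto simp: mscale_def vec_eq_iff algebra_simps)

definition Row :: "'a::field^'n^'m \<Rightarrow> ('a^'n) set" where
  "Row V = vec.span (range (\<lambda>i. V $ i))"

definition VL :: "('a::field^'n) set \<Rightarrow> ('a^'n^'m) set" where
  "VL L = {V. Row V \<subseteq> L}"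

definition dM :: "nat \<Rightarrow> ('a::field^'n^'m) set \<Rightarrow> nat" where
  "dM r C = (LEAST d. \<exists>L. vec.subspace L \<and> vec.dim L = d \<and> mat.dim (C \<inter> VL L) \<ge> r)"

end

theory Submission imports Defs begin

definition E :: "'m \<Rightarrow> 'a::field^'n \<Rightarrow> 'a^'n^'m" where
  "E i b = (\<chi> i'. if i' = i then b else 0)"

lemma E_hom: "module_hom (*s) mscale (E i :: 'a::field^'n \<Rightarrow> 'a^'n^'m)"
  by unfold_locales (auto simp: E_def mscale_def vec_eq_iff)

lemma VL_iff: assumes "vec.subspace L" shows "V \<in> VL L \<longleftrightarrow> (\<forall>i. V $ i \<in> L)"
proof
  assume "V \<in> VL L" thus "\<forall>i. V $ i \<in> L" unfolding VL_def Row_def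
    using vec.span_superset by blast
next
  assume "\<forall>i. V $ i \<in> L" thus "V \<in> VL L" unfolding VL_def Row_def
    using vec.span_minimal[OF _ assms] by blast
qed

lemma VL_subspace: assumes "vec.subspace L" shows "mat.subspace (VL L :: ('a::field^'n^'m) set)"
  unfolding mat.subspace_def using assms
  by (auto simp: VL_iff mscale_def vec.subspace_0 vec.subspace_add vec.subspace_scale)

lemma row_decomp: "(V :: 'a::field^'n^'m) = (\<Sum>i\<in>UNIV. E i (V $ i))"
  by (simp add: vec_eq_iff E_def)

definition MB :: "('a::field^'n) set \<Rightarrow> ('a^'n^'m) set" where
  "MB B = (\<lambda>(i,b). E i b) ` (UNIV \<times> B)"

lemma E_inj: assumes "b \<noteq> 0" "E i b = E i' b'" shows "i = i' \<and> b = b'"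
proof -
  have "E i b $ i = E i' b' $ i" using assms by simp
  hence "b = (if i = i' then b' else 0)" by (simp add: E_def)
  thus ?thesis using assms(1) by (auto split: if_splits)
qed

lemma MB_inj: assumes "vec.independent B" shows "inj_on (\<lambda>(i,b). E i b :: 'a::field^'n^'m) (UNIV \<times> B)"
proof -
  have "0 \<notin> B" using assms vec.dependent_zero by blast
  thus ?thesis unfolding inj_on_def
    by clarsimp (metis E_inj)
qed

lemma MB_card: assumes "vec.independent B"
  shows "card (MB B :: ('a::field^'n^'m) set) = CARD('m) * card B"
  unfolding MB_def using card_image[OF MB_inj[OF assms]] by (simp add: card_cartesian_product)

lemma MB_finite: assumes "vec.independent B" shows "finite (MB B)"
  unfolding MB_def using vec.finiteI_independent[OF assms] by simp

lemma MB_indep: assumes "vec.independent B"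
  shows "mat.independent (MB B :: ('a::field^'n^'m) set)"
proof (rule mat.independent_if_scalars_zero[OF MB_finite[OF assms]])
  fix f :: "'a^'n^'m \<Rightarrow> 'a" and x :: "'a^'n^'m"
  assume s: "(\<Sum>x\<in>MB B. mscale (f x) x) = 0" and x: "x \<in> MB B"
  from x obtain i0 b0 where b0: "b0 \<in> B" and xe: "x = E i0 b0" unfolding MB_def by auto
  have fB: "finite B" using vec.finiteI_independent[OF assms] .
  have "(\<Sum>x\<in>MB B. mscale (f x) x) = (\<Sum>(i,b)\<in>UNIV \<times> B. mscale (f (E i b)) (E i b))"
    unfolding MB_def by (subst sum.reindex[OF MB_inj[OF assms]]) (simp add: comp_def case_prod_unfold)
  also have "\<dots> = (\<Sum>i\<in>UNIV. \<Sum>b\<in>B. mscale (f (E i b)) (E i b))"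
    by (rule sum.cartesian_product[symmetric])
  finally have "(\<Sum>i\<in>UNIV. \<Sum>b\<in>B. mscale (f (E i b)) (E i b)) $ i0 = 0" using s by simp
  hence "(\<Sum>i\<in>UNIV. \<Sum>b\<in>B. (if i0 = i then f (E i b) *s b else 0)) = 0"
    by (simp add: mscale_def E_def if_distrib cong: if_cong)
  moreover have "(\<Sum>i\<in>UNIV. \<Sum>b\<in>B. (if i0 = i then f (E i b) *s b else 0))
     = (\<Sum>i\<in>UNIV. if i0 = i then (\<Sum>b\<in>B. f (E i b) *s b) else 0)"
    by (intro sum.cong) auto
  ultimately have "(\<Sum>b\<in>B. f (E i0 b) *s b) = 0"
    by (simp add: sum.delta)
  moreover have "\<forall>c. (\<Sum>v\<in>B. c v *s v) = 0 \<longrightarrow> (\<forall>v\<in>B. c v = 0)"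
    using vec.independent_explicit[of B] assms by blast
  ultimately have "f (E i0 b0) = 0" using b0 by (elim allE[where x="\<lambda>b. f (E i0 b)"]) auto
  thus "f x = 0" using xe by simp
qed

lemma MB_sub: assumes "vec.subspace L" "B \<subseteq> L" shows "MB B \<subseteq> (VL L :: ('a::field^'n^'m) set)"
  using assms unfolding MB_def by (auto simp: VL_iff E_def vec.subspace_0)

lemma MB_span: assumes "vec.subspace L" "L \<subseteq> vec.span B"
  shows "VL L \<subseteq> mat.span (MB B :: ('a::field^'n^'m) set)"
proof
  fix V :: "'a^'n^'m" assume V: "V \<in> VL L"
  have "E i (V $ i) \<in> mat.span (MB B)" for i
  proof -
    have "V $ i \<in> vec.span B" using V assms by (auto simp: VL_iff)
    hence "E i (V $ i) \<in> mat.span (E i ` B)"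
      using module_hom.span_image[OF E_hom, of i B] by auto
    moreover have "E i ` B \<subseteq> MB B" unfolding MB_def by auto
    ultimately show ?thesis using mat.span_mono by blast
  qed
  hence "(\<Sum>i\<in>UNIV. E i (V $ i)) \<in> mat.span (MB B)" by (intro mat.span_sum) auto
  thus "V \<in> mat.span (MB B)" using row_decomp[of V] by simp
qed

lemma dim_VL: assumes "vec.subspace L"
  shows "mat.dim (VL L :: ('a::field^'n^'m) set) = CARD('m) * vec.dim L"
proof -
  obtain B where B: "B \<subseteq> L" "vec.independent B" "L \<subseteq> vec.span B" "card B = vec.dim L"
    using vec.basis_exists[of L] by blast
  show ?thesis
    by (rule mat.dim_unique[OF MB_sub[OF assms B(1)] MB_span[OF assms B(3)] MB_indep[OF B(2)]])
       (simp add: MB_card[OF B(2)] B(4))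
qed

lemma mat_fd: "finite_dimensional_vector_space (mscale :: 'a::field \<Rightarrow> 'a^'n^'m \<Rightarrow> 'a^'n^'m) (MB cart_basis)"
proof unfold_locales
  show "finite (MB cart_basis :: ('a^'n^'m) set)" by (rule MB_finite[OF independent_cart_basis])
  show "mat.independent (MB cart_basis :: ('a^'n^'m) set)" by (rule MB_indep[OF independent_cart_basis])
  have "VL UNIV \<subseteq> mat.span (MB cart_basis :: ('a^'n^'m) set)"
    by (rule MB_span) (auto simp: vec.subspace_UNIV)
  moreover have "VL UNIV = (UNIV :: ('a^'n^'m) set)" by (auto simp: VL_def)
  ultimately show "mat.span (MB cart_basis :: ('a^'n^'m) set) = UNIV" by auto
qed

interpretation matf: finite_dimensional_vector_space "mscale :: 'a::field \<Rightarrow> 'a^'n^'m \<Rightarrow> 'a^'n^'m" "MB cart_basis"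
  by (rule mat_fd)

lemma "S \<subseteq> T \<Longrightarrow> mat.dim S \<le> mat.dim (T :: ('a::field^'n^'m) set)"
  by (rule matf.dim_subset)

lemma ceil_char: assumes "m > 0"
  shows "nat \<lceil>real r / real m\<rceil> \<le> d \<longleftrightarrow> r \<le> m * (d::nat)"
proof -
  have "nat \<lceil>real r / real m\<rceil> \<le> d \<longleftrightarrow> \<lceil>real r / real m\<rceil> \<le> int d" by linarith
  also have "\<dots> \<longleftrightarrow> real r / real m \<le> real d" by (simp add: ceiling_le_iff)
  also have "\<dots> \<longleftrightarrow> real r \<le> real m * real d" using assms by (simp add: divide_le_eq mult.commute)
  also have "\<dots> \<longleftrightarrow> r \<le> m * d" by (metis of_nat_le_iff of_nat_mult)
  finally show ?thesis .
qed

theorem proposition16: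
  fixes C :: "('a::field^'n^'m) set" and k :: nat
  assumes "k > 0"
    and "mat.subspace C"
    and "mat.dim C = CARD('m) * k"
  shows "((\<exists>L. vec.subspace L \<and> C = VL L) \<longleftrightarrow> dM (k * CARD('m)) C = k)
       \<and> (dM (k * CARD('m)) C = k \<longleftrightarrow>
          (\<forall>r. 1 \<le> r \<and> r \<le> CARD('m) * k \<longrightarrow> dM r C = nat \<lceil>real r / real CARD('m)\<rceil>))"
proof -
  define m where "m = CARD('m)"
  have m0: "m > 0" unfolding m_def by simp
  have upper: "mat.dim (C \<inter> VL L) \<le> m * vec.dim L" if "vec.subspace L" for L
    using matf.dim_subset[of "C \<inter> VL L" "VL L"] dim_VL[OF that, where 'm='m] unfolding m_def by auto
  have ex: "\<exists>L. vec.subspace L \<and> vec.dim L = d \<and> mat.dim (C \<inter> VL L) \<ge> r"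
    if "r \<le> m * k" "d = vec.dim (UNIV :: ('a^'n) set)" for r d
  proof -
    have "C \<inter> VL UNIV = C" by (auto simp: VL_def)
    thus ?thesis using that assms(3) vec.subspace_UNIV unfolding m_def by (intro exI[of _ UNIV]) auto
  qed
  have dMprop: "\<exists>L. vec.subspace L \<and> vec.dim L = dM r C \<and> mat.dim (C \<inter> VL L) \<ge> r"
    if "r \<le> m * k" for r
    unfolding dM_def by (rule LeastI_ex) (use ex[OF that] in blast)
  have dMle: "dM r C \<le> vec.dim L" if "vec.subspace L" "mat.dim (C \<inter> VL L) \<ge> r" for r L
    unfolding dM_def by (rule Least_le) (use that in blast)
  have dMge: "r \<le> m * dM r C" if rk: "r \<le> m * k" for r
  proof -
    obtain L where L: "vec.subspace L" "vec.dim L = dM r C" "mat.dim (C \<inter> VL L) \<ge> r"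
      using dMprop[OF rk] by blast
    show ?thesis using upper[OF L(1)] L by simp
  qed
  have d13: "\<forall>r. 1 \<le> r \<and> r \<le> m * k \<longrightarrow> dM r C = nat \<lceil>real r / real m\<rceil>"
    if "vec.subspace L0" "C = VL L0" for L0
  proof (intro allI impI)
    fix r assume r: "1 \<le> r \<and> r \<le> m * k"
    define c where "c = nat \<lceil>real r / real m\<rceil>"
    have dL0: "vec.dim L0 = k" using assms(3) dim_VL[OF that(1), where 'm='m] that(2) m0
      unfolding m_def by simp
    have ck: "c \<le> vec.dim L0" unfolding dL0 using ceil_char[OF m0, of r k] r unfolding c_def by (simp add: mult.commute)
    obtain T where T: "vec.subspace T" "T \<subseteq> vec.span L0" "vec.dim T = c"
      using vec.choose_subspace_of_subspace[OF ck] by blast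
    have "T \<subseteq> L0" using T(2) vec.span_eq_iff that(1) by blast
    hence "VL T \<subseteq> (VL L0 :: ('a^'n^'m) set)" by (auto simp: VL_def)
    hence "C \<inter> VL T = VL T" using that(2) by auto
    hence "mat.dim (C \<inter> VL T) = m * c" using dim_VL[OF T(1)] T(3) unfolding m_def by simp
    moreover have "r \<le> m * c" using ceil_char[OF m0, of r c] unfolding c_def by blast
    ultimately have "dM r C \<le> c" using dMle[OF T(1)] T(3) by simp
    moreover have "c \<le> dM r C" using ceil_char[OF m0, of r "dM r C"] dMge r unfolding c_def by blast
    ultimately show "dM r C = c" by simp
  qed
  have d32: "dM (k * m) C = k" if "\<forall>r. 1 \<le> r \<and> r \<le> m * k \<longrightarrow> dM r C = nat \<lceil>real r / real m\<rceil>"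
  proof -
    have "1 \<le> m * k" using m0 assms(1) by simp
    hence "dM (m * k) C = nat \<lceil>real (m * k) / real m\<rceil>" using that by simp
    also have "\<dots> = k" using m0 by simp
    finally show ?thesis by (simp add: mult.commute)
  qed
  have d21: "\<exists>L. vec.subspace L \<and> C = VL L" if h: "dM (k * m) C = k"
  proof -
    obtain L where L: "vec.subspace L" "vec.dim L = k" "mat.dim (C \<inter> VL L) \<ge> k * m"
      using dMprop[of "k * m"] h by (auto simp: mult.commute)
    have sD: "mat.subspace (C \<inter> VL L)" using assms(2) VL_subspace[OF L(1)] by (rule mat.subspace_inter)
    have "C \<inter> VL L = C"
      by (rule matf.subspace_dim_equal[OF sD assms(2)]) (use L(3) assms(3) in \<open>auto simp: m_def mult.commute\<close>)
    moreover have "C \<inter> VL L = VL L"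
      by (rule matf.subspace_dim_equal[OF sD VL_subspace[OF L(1)]])
         (use L dim_VL[OF L(1), where 'm='m] in \<open>auto simp: m_def mult.commute\<close>)
    ultimately show ?thesis using L(1) by auto
  qed
  show ?thesis unfolding m_def[symmetric] using d13 d32 d21 by blast
qed

end
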